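(* There is a $D$-configuration $(x_p,l_m)$ in $L$ and a set $S$ of 16 of its 26 roots whose graph (incidence subgraph) is the $M_{666}$ tree, such that $\operatorname{rad}(S)=\operatorname{rad}(\{x_p\}\cup\{l_m\})$ up to units; in particular the group $R_1$ generated by the $\omega$-reflections in the 16 roots of $S$ equals the group $R_2$ generated by the $\omega$-reflections in all 26 roots.
   Context: Let $\omega=e^{2\pi i/3}$, $\mathcal E=\mathbb Z[\omega]$, $\theta=\omega-\bar\omega=\sqrt{-3}$; Hermitian forms are conjugate-linear in the first variable. $\Lambda\subset\mathcal E^{12}$ is the complex Leech lattice (vectors $(m+\theta c_i+3z_i)_i$ with $m\in\{0,\pm1\}$, $c\in\{0,\pm1\}^{12}$ reducing mod $\theta$ to a word of the ternary Golay code, $z_i\in\mathcal E$, $\sum z_i\equiv m\pmod\theta$; form $-\frac13\sum\bar u_iv_i$). $H=\mathcal E^2$ with form $u^*\begin{pmatrix}0&\bar\theta\\ \theta&0\end{pmatrix}v$; $L=\Lambda\oplus H$. A root is a vector of $L$ of norm $-3$; the $\omega$-reflection in $r$ is $\phi_r(v)=v-(1-\omega)r\langle r,v\rangle/|r|^2$. A $D$-configuration is a family of roots $x_p$ ($p$ a point of $P^2(\mathbb F_3)$), $l_m$ ($m$ a line) with $\langle x_p,x_{p'}\rangle=0$ ($p\neq p'$), $\langle l_m,l_{m'}\rangle=0$ ($m\neq m'$), $\langle x_p,l_m\rangle=-\omega\theta$ if $p\in m$ and $0$ otherwise; its graph is the incidence graph of $P^2(\mathbb F_3)$. The $M_{666}$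 tree is the tree with 16 vertices consisting of a central vertex and three arms, each a path of 5 vertices attached to the center. For a set $\Phi$ of roots, $\Phi^{(0)}=\Phi$, $\Phi^{(n)}=\{\phi_a(b):a,b\in\Phi^{(n-1)}\}$, $\operatorname{rad}(\Phi)=\bigcup_n\Phi^{(n)}$. *)

theory Defs
  imports Complex_Main "HOL-Algebra.Bij" "HOL-Algebra.Generated_Groups"
begin

definition omega :: complex where
  "omega = Complex (-1/2) (sqrt 3 / 2)"

definition theta :: complex where
  "theta = omega - cnj omega"              (* = sqrt(-3) *)

definition Eis :: "complex set" where
  "Eis = {of_int a + of_int b * omega | a b. True}"

definition Eis_units :: "complex set" where
  "Eis_units = {u \<in> Eis. \<exists>v\<in>Eis. u * v = 1}"

definition cong_theta :: "complex \<Rightarrow> complex \<Rightarrow> bool" where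
  "cong_theta a b \<longleftrightarrow> (\<exists>e\<in>Eis. a - b = theta * e)"

definition golay_gen :: "nat \<Rightarrow> nat \<Rightarrow> int" where
  "golay_gen j i = [[1,0,0,0,0,0,0,1,1,1,1,1],
                    [0,1,0,0,0,0,1,0,1,2,2,1],
                    [0,0,1,0,0,0,1,1,0,1,2,2],
                    [0,0,0,1,0,0,1,2,1,0,1,2],
                    [0,0,0,0,1,0,1,2,2,1,0,1],
                    [0,0,0,0,0,1,1,1,2,2,1,0]] ! j ! i"

definition golay_word :: "(nat \<Rightarrow> int) \<Rightarrow> bool" where
  "golay_word c \<longleftrightarrow> (\<exists>a :: nat \<Rightarrow> int. \<forall>i<12. (c i - (\<Sum>j<6. a j * golay_gen j i)) mod 3 = 0)"

section \<open>The lattice L = Lambda + H, vectors indexed by 0..13 (coordinates 12, 13 are H)\<close>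

type_synonym vec = "nat \<Rightarrow> complex"

definition leech :: "vec set" where
  "leech = {v. \<exists>(m::int) (c::nat \<Rightarrow> int) (z::nat \<Rightarrow> complex).
      m \<in> {-1,0,1} \<and> (\<forall>i<12. c i \<in> {-1,0,1}) \<and> golay_word c \<and>
      (\<forall>i<12. z i \<in> Eis) \<and> cong_theta (\<Sum>i<12. z i) (of_int m) \<and>
      (\<forall>i<12. v i = of_int m + theta * of_int (c i) + 3 * z i)}"

definition Lat :: "vec set" where
  "Lat = {v. (\<exists>w\<in>leech. \<forall>i<12. v i = w i) \<and> v 12 \<in> Eis \<and> v 13 \<in> Eis \<and>
             (\<forall>i\<ge>14. v i = 0)}"

definition herm :: "vec \<Rightarrow> vec \<Rightarrow> complex" where
  "herm u v = - (1/3) * (\<Sum>i<12. cnj (u i) * v i)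
              + cnj (u 12) * cnj theta * v 13 + cnj (u 13) * theta * v 12"

definition is_root :: "vec \<Rightarrow> bool" where
  "is_root r \<longleftrightarrow> r \<in> Lat \<and> herm r r = -3"

definition refl :: "vec \<Rightarrow> vec \<Rightarrow> vec" where
  "refl r v = (\<lambda>i. v i - (1 - omega) * herm r v / herm r r * r i)"

fun rad_step :: "vec set \<Rightarrow> nat \<Rightarrow> vec set" where
  "rad_step \<Phi> 0 = \<Phi>"
| "rad_step \<Phi> (Suc n) = {refl a b | a b. a \<in> rad_step \<Phi> n \<and> b \<in> rad_step \<Phi> n}"

definition rad :: "vec set \<Rightarrow> vec set" where
  "rad \<Phi> = (\<Union>n. rad_step \<Phi> n)"

definition eq_up_to_units :: "vec set \<Rightarrow> vec set \<Rightarrow> bool" where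
  "eq_up_to_units A B \<longleftrightarrow>
     (\<forall>a\<in>A. \<exists>u\<in>Eis_units. \<exists>b\<in>B. a = (\<lambda>i. u * b i)) \<and>
     (\<forall>b\<in>B. \<exists>u\<in>Eis_units. \<exists>a\<in>A. b = (\<lambda>i. u * a i))"

definition refl_group :: "vec set \<Rightarrow> (vec \<Rightarrow> vec) set" where
  "refl_group \<Phi> = generate (BijGroup UNIV) (refl ` \<Phi>)"

text \<open>Points (and lines) are normalised triples over {0,1,2} whose first nonzero entry is 1.\<close>
definition P2 :: "(int \<times> int \<times> int) set" where
  "P2 = {(a,b,c). a \<in> {0,1,2} \<and> b \<in> {0,1,2} \<and> c \<in> {0,1,2} \<and>
           (a = 1 \<or> (a = 0 \<and> b = 1) \<or> (a = 0 \<and> b = 0 \<and> c = 1))}"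

definition incident :: "int \<times> int \<times> int \<Rightarrow> int \<times> int \<times> int \<Rightarrow> bool" where
  "incident p m \<longleftrightarrow> (case p of (a,b,c) \<Rightarrow> case m of (d,e,f) \<Rightarrow> (a*d + b*e + c*f) mod 3 = 0)"

definition D_config :: "(int \<times> int \<times> int \<Rightarrow> vec) \<Rightarrow> (int \<times> int \<times> int \<Rightarrow> vec) \<Rightarrow> bool" where
  "D_config x l \<longleftrightarrow>
     (\<forall>p\<in>P2. is_root (x p)) \<and> (\<forall>m\<in>P2. is_root (l m)) \<and>
     (\<forall>p\<in>P2. \<forall>p'\<in>P2. p \<noteq> p' \<longrightarrow> herm (x p) (x p') = 0) \<and>
     (\<forall>m\<in>P2. \<forall>m'\<in>P2. m \<noteq> m' \<longrightarrow> herm (l m) (l m') = 0) \<and>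
     (\<forall>p\<in>P2. \<forall>m\<in>P2. herm (x p) (l m) = (if incident p m then - omega * theta else 0))"

text \<open>The 26 vertices of the configuration: Inl p for x_p, Inr m for l_m.\<close>
definition D_vertices :: "((int \<times> int \<times> int) + (int \<times> int \<times> int)) set" where
  "D_vertices = Inl ` P2 \<union> Inr ` P2"

fun D_root :: "(int \<times> int \<times> int \<Rightarrow> vec) \<Rightarrow> (int \<times> int \<times> int \<Rightarrow> vec) \<Rightarrow>
      (int \<times> int \<times> int) + (int \<times> int \<times> int) \<Rightarrow> vec" where
  "D_root x l (Inl p) = x p"
| "D_root x l (Inr m) = l m"

fun inc_adj :: "(int \<times> int \<times> int) + (int \<times> int \<times> int) \<Rightarrow> (int \<times> int \<times> int) + (int \<times> int \<times> int) \<Rightarrow> bool" where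
  "inc_adj (Inl p) (Inr m) = incident p m"
| "inc_adj (Inr m) (Inl p) = incident p m"
| "inc_adj _ _ = False"

definition m666_edges :: "(nat \<times> nat) set" where
  "m666_edges = {(0,1),(1,2),(2,3),(3,4),(4,5),
                 (0,6),(6,7),(7,8),(8,9),(9,10),
                 (0,11),(11,12),(12,13),(13,14),(14,15)}"

definition m666_adj :: "nat \<Rightarrow> nat \<Rightarrow> bool" where
  "m666_adj i j \<longleftrightarrow> (i,j) \<in> m666_edges \<or> (j,i) \<in> m666_edges"

end

theory Submission
  imports Defs "HOL-Algebra.Bij"
begin


type_synonym ep = "int \<times> int"

definition ei :: "ep \<Rightarrow> complex" where
  "ei p = of_int (fst p) + of_int (snd p) * omega"

fun padd :: "ep \<Rightarrow> ep \<Rightarrow> ep" where "padd (a,b) (c,d) = (a+c, b+d)"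
fun psub :: "ep \<Rightarrow> ep \<Rightarrow> ep" where "psub (a,b) (c,d) = (a-c, b-d)"
fun pmul :: "ep \<Rightarrow> ep \<Rightarrow> ep" where "pmul (a,b) (c,d) = (a*c - b*d, a*d + b*c - b*d)"
fun pcnj :: "ep \<Rightarrow> ep" where "pcnj (a,b) = (a - b, - b)"

lemma sqrt3_sq: "sqrt 3 * sqrt 3 = (3::real)" by simp

lemma omega_sq: "omega * omega = -1 - omega"
  by (simp add: omega_def complex_eq_iff field_simps)

lemma cnj_omega: "cnj omega = -1 - omega"
  by (simp add: omega_def complex_eq_iff)

lemma theta_eq: "theta = 1 + 2 * omega"
  by (simp add: theta_def cnj_omega)

lemma ei_add: "ei p + ei q = ei (padd p q)"
  by (cases p; cases q) (simp add: ei_def algebra_simps)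

lemma ei_sub: "ei p - ei q = ei (psub p q)"
  by (cases p; cases q) (simp add: ei_def algebra_simps)

lemma ei_mul: "ei p * ei q = ei (pmul p q)"
proof (cases p; cases q)
  fix a b c d assume "p = (a,b)" "q = (c,d)"
  have "(of_int a + of_int b * omega) * (of_int c + of_int d * omega) =
        of_int a * of_int c + (of_int a * of_int d + of_int b * of_int c) * omega + of_int b * of_int d * (omega * omega)"
    by (simp add: algebra_simps)
  also have "\<dots> = of_int (a*c - b*d) + of_int (a*d + b*c - b*d) * omega"
    by (simp add: omega_sq algebra_simps)
  finally show ?thesis using \<open>p = (a,b)\<close> \<open>q = (c,d)\<close> by (simp add: ei_def)
qed

lemma ei_cnj: "cnj (ei p) = ei (pcnj p)"
  by (cases p) (simp add: ei_def cnj_omega algebra_simps)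

lemma ei_Re: "Re (ei p) = of_int (fst p) - of_int (snd p) / 2"
  by (simp add: ei_def omega_def)
lemma ei_Im: "Im (ei p) = of_int (snd p) * sqrt 3 / 2"
  by (simp add: ei_def omega_def)

lemma ei_inj: "ei p = ei q \<longleftrightarrow> p = q"
proof
  assume h: "ei p = ei q"
  hence "Im (ei p) = Im (ei q)" by simp
  hence s: "snd p = snd q" by (simp add: ei_Im)
  from h have "Re (ei p) = Re (ei q)" by simp
  with s have "fst p = fst q" by (simp add: ei_Re)
  with s show "p = q" by (simp add: prod_eq_iff)
qed simp

lemma ei_zero: "ei (0,0) = 0" by (simp add: ei_def)
lemma ei_of_int: "ei (k,0) = of_int k" by (simp add: ei_def)
lemma ei_in_Eis: "ei p \<in> Eis" by (auto simp: Eis_def ei_def)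
lemma Eis_ei: "z \<in> Eis \<Longrightarrow> \<exists>p. z = ei p" by (auto simp: Eis_def ei_def)




definition vL :: "ep list \<Rightarrow> vec" where
  "vL xs = (\<lambda>i. if i < length xs then ei (xs!i) else 0)"

fun dotL :: "ep list \<Rightarrow> ep list \<Rightarrow> ep" where
  "dotL (x#xs) (y#ys) = padd (pmul (pcnj x) y) (dotL xs ys)"
| "dotL _ _ = (0,0)"

definition hn :: "ep list \<Rightarrow> ep list \<Rightarrow> ep" where
  "hn xs ys = psub (pmul (3,0) (padd (pmul (pmul (pcnj (xs!12)) (-1,-2)) (ys!13))
                                    (pmul (pmul (pcnj (xs!13)) (1,2)) (ys!12))))
                   (dotL (take 12 xs) (take 12 ys))"

lemma sum_dotL:
  "length xs = n \<Longrightarrow> length ys = n \<Longrightarrow> (\<Sum>i<n. cnj (ei (xs!i)) * ei (ys!i)) = ei (dotL xs ys)"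
proof (induction xs arbitrary: ys n)
  case Nil thus ?case by (simp add: ei_zero)
next
  case (Cons x xs)
  then obtain y ys' m where ys: "ys = y # ys'" and n: "n = Suc m" and "length xs = m" "length ys' = m"
    by (cases ys) auto
  with Cons.IH have IH: "(\<Sum>i<m. cnj (ei (xs!i)) * ei (ys'!i)) = ei (dotL xs ys')" by blast
  have "(\<Sum>i<Suc m. cnj (ei ((x#xs)!i)) * ei ((y#ys')!i)) =
        cnj (ei ((x#xs)!0)) * ei ((y#ys')!0) + (\<Sum>i<m. cnj (ei ((x#xs)!Suc i)) * ei ((y#ys')!Suc i))"
    by (rule sum.lessThan_Suc_shift)
  also have "\<dots> = ei (pmul (pcnj x) y) + ei (dotL xs ys')" using IH by (simp add: ei_cnj ei_mul)
  finally show ?case unfolding ys n by (simp add: ei_add)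
qed

lemma theta_ei: "theta = ei (1,2)" by (simp add: theta_eq ei_def)
lemma cnj_theta_ei: "cnj theta = ei (-1,-2)" by (simp add: theta_ei ei_cnj)

lemma herm_vL:
  assumes "length xs = 14" "length ys = 14"
  shows "3 * herm (vL xs) (vL ys) = ei (hn xs ys)"
proof -
  have "(\<Sum>i<12. cnj (vL xs i) * vL ys i) = (\<Sum>i<12. cnj (ei (take 12 xs!i)) * ei (take 12 ys!i))"
    by (rule sum.cong) (auto simp: vL_def assms)
  also have "\<dots> = ei (dotL (take 12 xs) (take 12 ys))"
    by (rule sum_dotL) (auto simp: assms)
  finally have S: "(\<Sum>i<12. cnj (vL xs i) * vL ys i) = ei (dotL (take 12 xs) (take 12 ys))" .
  have v12: "vL xs 12 = ei (xs!12)" "vL xs 13 = ei (xs!13)" "vL ys 12 = ei (ys!12)" "vL ys 13 = ei (ys!13)"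
    by (auto simp: vL_def assms)
  have A: "cnj (vL xs 12) * cnj theta * vL ys 13 = ei (pmul (pmul (pcnj (xs!12)) (-1,-2)) (ys!13))"
    unfolding v12 by (simp add: ei_cnj cnj_theta_ei ei_mul)
  have B: "cnj (vL xs 13) * theta * vL ys 12 = ei (pmul (pmul (pcnj (xs!13)) (1,2)) (ys!12))"
    unfolding v12 by (simp add: ei_cnj theta_ei ei_mul)
  have 3: "(3::complex) = ei (3,0)" by (simp add: ei_def)
  have "3 * herm (vL xs) (vL ys) = 3 * (ei (pmul (pmul (pcnj (xs!12)) (-1,-2)) (ys!13)) + ei (pmul (pmul (pcnj (xs!13)) (1,2)) (ys!12))) - ei (dotL (take 12 xs) (take 12 ys))"
    unfolding herm_def S A[symmetric] B[symmetric] by (simp add: algebra_simps)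
  also have "\<dots> = ei (hn xs ys)"
    unfolding hn_def by (simp only: ei_add 3 ei_mul ei_sub)
  finally show ?thesis .
qed




section \<open>Units\<close>

definition U :: "complex set" where "U = {u. \<exists>k::nat. u = omega^k \<or> u = - (omega^k)}"

lemma cnj_omega_omega: "cnj omega * omega = 1"
  by (simp add: omega_def complex_eq_iff field_simps)

lemma cnj_omega_sq: "cnj omega = omega^2"
  by (simp add: cnj_omega power2_eq_square omega_sq)

lemma U_norm: "u \<in> U \<Longrightarrow> cnj u * u = 1"
proof -
  assume "u \<in> U"
  then obtain k where "u = omega^k \<or> u = - (omega^k)" by (auto simp: U_def)
  moreover have "cnj (omega^k) * omega^k = 1"
    by (simp add: power_mult_distrib[symmetric] cnj_omega_omega)
  ultimately show ?thesis by auto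
qed

lemma U_mult: "u \<in> U \<Longrightarrow> v \<in> U \<Longrightarrow> u * v \<in> U"
proof -
  assume "u \<in> U" "v \<in> U"
  then obtain k j where k: "u = omega^k \<or> u = - (omega^k)" and j: "v = omega^j \<or> v = - (omega^j)"
    by (auto simp: U_def)
  have "u * v = omega^(k+j) \<or> u * v = - (omega^(k+j))"
    using k j by (auto simp: power_add)
  thus ?thesis by (auto simp: U_def)
qed

lemma U_pow: "omega^k \<in> U" by (auto simp: U_def)
lemma U_one: "1 \<in> U" using U_pow[of 0] by simp
lemma U_neg: "u \<in> U \<Longrightarrow> - u \<in> U" by (auto simp: U_def)

lemma U_cnj: "u \<in> U \<Longrightarrow> cnj u \<in> U"
proof -
  assume "u \<in> U"
  then obtain k where k: "u = omega^k \<or> u = - (omega^k)" by (auto simp: U_def)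
  have "cnj (omega^k) = omega^(2*k)" by (simp add: cnj_omega_sq power_mult)
  with k show ?thesis by (auto simp: U_def)
qed

lemma Eis_mult: "x \<in> Eis \<Longrightarrow> y \<in> Eis \<Longrightarrow> x * y \<in> Eis"
  by (metis Eis_ei ei_mul ei_in_Eis)
lemma Eis_neg: "x \<in> Eis \<Longrightarrow> - x \<in> Eis"
proof -
  assume "x \<in> Eis" then obtain p where "x = ei p" using Eis_ei by blast
  thus ?thesis using ei_in_Eis[of "(- fst p, - snd p)"] by (simp add: ei_def)
qed
lemma omega_Eis: "omega \<in> Eis"
  using ei_in_Eis[of "(0,1)"] by (simp add: ei_def)
lemma omega_pow_Eis: "omega^k \<in> Eis"
proof (induction k)
  case 0 show ?case using ei_in_Eis[of "(1,0)"] by (simp add: ei_def)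
next
  case (Suc k) thus ?case using Eis_mult[OF omega_Eis] by simp
qed
lemma U_Eis: "u \<in> U \<Longrightarrow> u \<in> Eis"
  using omega_pow_Eis Eis_neg by (auto simp: U_def)
lemma U_units: "u \<in> U \<Longrightarrow> u \<in> Eis_units"
proof -
  assume u: "u \<in> U"
  have "u * cnj u = 1" using U_norm[OF u] by (simp add: mult.commute)
  thus ?thesis using U_Eis[OF u] U_Eis[OF U_cnj[OF u]] by (auto simp: Eis_units_def)
qed

section \<open>Hermitian form\<close>

lemma herm_scale: "herm (\<lambda>i. c * u i) (\<lambda>i. d * v i) = cnj c * d * herm u v"
proof -
  have "(\<Sum>i<12. cnj (c * u i) * (d * v i)) = cnj c * d * (\<Sum>i<12. cnj (u i) * v i)"
    by (simp add: sum_distrib_left algebra_simps)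
  thus ?thesis unfolding herm_def by (simp add: algebra_simps)
qed

lemma herm_diff2: "herm u (\<lambda>i. v i - c * w i) = herm u v - c * herm u w"
proof -
  have "(\<Sum>i<12. cnj (u i) * (v i - c * w i)) = (\<Sum>i<12. cnj (u i) * v i) - c * (\<Sum>i<12. cnj (u i) * w i)"
    by (simp add: sum_distrib_left algebra_simps sum_subtractf)
  thus ?thesis unfolding herm_def by (simp add: algebra_simps)
qed

lemma herm_diff1: "herm (\<lambda>i. v i - c * w i) u = herm v u - cnj c * herm w u"
proof -
  have "(\<Sum>i<12. cnj (v i - c * w i) * u i) = (\<Sum>i<12. cnj (v i) * u i) - cnj c * (\<Sum>i<12. cnj (w i) * u i)"
    by (simp add: sum_distrib_left algebra_simps sum_subtractf)
  thus ?thesis unfolding herm_def by (simp add: algebra_simps)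
qed

lemma herm_sym: "herm u v = cnj (herm v u)"
proof -
  have "cnj (\<Sum>i<12. cnj (v i) * u i) = (\<Sum>i<12. cnj (u i) * v i)"
    by (simp add: mult.commute)
  moreover have "cnj (1/3 :: complex) = 1/3" by (simp add: complex_eq_iff)
  moreover have "cnj theta = - theta" by (simp add: theta_def)
  ultimately show ?thesis unfolding herm_def by (simp add: algebra_simps)
qed

section \<open>Reflections\<close>

lemma refl_scale:
  assumes c: "cnj c * c = 1"
  shows "refl (\<lambda>i. c * a i) (\<lambda>i. d * b i) = (\<lambda>i. d * refl a b i)"
proof
  fix i
  have h1: "herm (\<lambda>i. c * a i) (\<lambda>i. d * b i) = cnj c * d * herm a b" by (rule herm_scale)
  have h2: "herm (\<lambda>i. c * a i) (\<lambda>i. c * a i) = herm a a" using herm_scale[of c a c a] c by simp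
  have "(1 - omega) * (cnj c * d * herm a b) / herm a a * (c * a i) =
        d * ((1 - omega) * herm a b / herm a a * a i) * (cnj c * c)"
    by (simp add: algebra_simps)
  also have "\<dots> = d * ((1 - omega) * herm a b / herm a a * a i)" using c by simp
  finally have e: "(1 - omega) * (cnj c * d * herm a b) / herm a a * (c * a i) =
        d * ((1 - omega) * herm a b / herm a a * a i)" .
  show "refl (\<lambda>i. c * a i) (\<lambda>i. d * b i) i = d * refl a b i"
    unfolding refl_def h1 h2 e by (simp add: right_diff_distrib)
qed

lemma refl_unit_arg: "cnj c * c = 1 \<Longrightarrow> refl (\<lambda>i. c * a i) = refl a"
proof
  fix b assume c: "cnj c * c = 1"
  have "refl (\<lambda>i. c * a i) (\<lambda>i. 1 * b i) = (\<lambda>i. 1 * refl a b i)" by (rule refl_scale[OF c])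
  thus "refl (\<lambda>i. c * a i) b = refl a b" by simp
qed

lemma refl_self: "refl a a = (if herm a a = 0 then a else (\<lambda>i. omega * a i))"
proof (cases "herm a a = 0")
  case True thus ?thesis by (simp add: refl_def)
next
  case False
  hence e: "(1 - omega) * herm a a / herm a a = 1 - omega" by simp
  show ?thesis using False unfolding refl_def e by (simp add: algebra_simps)
qed




section \<open>rad\<close>

lemma rad_step_mono: "\<Phi> \<subseteq> \<Psi> \<Longrightarrow> rad_step \<Phi> n \<subseteq> rad_step \<Psi> n"
  by (induction n) auto

lemma rad_mono: "\<Phi> \<subseteq> \<Psi> \<Longrightarrow> rad \<Phi> \<subseteq> rad \<Psi>"
  unfolding rad_def using rad_step_mono by blast

lemma omega_pow_mult: "(\<lambda>i. omega^j * (omega^k * v i)) = (\<lambda>i. omega^(j+k) * v i)"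
  by (simp add: power_add mult.assoc)

lemma step_shift1:
  assumes "v \<in> rad_step \<Phi> n"
  shows "\<exists>k. (\<lambda>i. omega^k * v i) \<in> rad_step \<Phi> (Suc n)"
proof -
  have r: "refl v v \<in> rad_step \<Phi> (Suc n)" using assms by auto
  show ?thesis
  proof (cases "herm v v = 0")
    case True
    hence "refl v v = (\<lambda>i. omega^0 * v i)" by (simp add: refl_self)
    thus ?thesis using r by metis
  next
    case False
    hence "refl v v = (\<lambda>i. omega^1 * v i)" by (simp add: refl_self)
    thus ?thesis using r by metis
  qed
qed

lemma step_shift:
  assumes "v \<in> rad_step \<Phi> n" "n \<le> m"
  shows "\<exists>k. (\<lambda>i. omega^k * v i) \<in> rad_step \<Phi> m"
  using assms(2)
proof (induction m rule: dec_induct)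
  case base
  have "(\<lambda>i. omega^0 * v i) = v" by simp
  thus ?case using assms(1) by metis
next
  case (step m)
  then obtain k where "(\<lambda>i. omega^k * v i) \<in> rad_step \<Phi> m" by blast
  from step_shift1[OF this] obtain j where
    "(\<lambda>i. omega^j * (omega^k * v i)) \<in> rad_step \<Phi> (Suc m)" by auto
  thus ?case unfolding omega_pow_mult by blast
qed

definition Q :: "vec set \<Rightarrow> vec set" where
  "Q \<Phi> = {v. \<exists>u\<in>U. (\<lambda>i. u * v i) \<in> rad \<Phi>}"

lemma Q_refl:
  assumes a: "a \<in> Q \<Phi>" and b: "b \<in> Q \<Phi>"
  shows "refl a b \<in> Q \<Phi>"
proof -
  obtain u1 n1 where u1: "u1 \<in> U" "(\<lambda>i. u1 * a i) \<in> rad_step \<Phi> n1"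
    using a by (auto simp: Q_def rad_def)
  obtain u2 n2 where u2: "u2 \<in> U" "(\<lambda>i. u2 * b i) \<in> rad_step \<Phi> n2"
    using b by (auto simp: Q_def rad_def)
  define N where "N = max n1 n2"
  obtain k1 where k1: "(\<lambda>i. omega^k1 * (u1 * a i)) \<in> rad_step \<Phi> N"
    using step_shift[OF u1(2), of N] by (auto simp: N_def)
  obtain k2 where k2: "(\<lambda>i. omega^k2 * (u2 * b i)) \<in> rad_step \<Phi> N"
    using step_shift[OF u2(2), of N] by (auto simp: N_def)
  define c where "c = omega^k1 * u1"
  define d where "d = omega^k2 * u2"
  have cU: "c \<in> U" "d \<in> U" using U_mult U_pow u1(1) u2(1) by (auto simp: c_def d_def)
  have k1': "(\<lambda>i. c * a i) \<in> rad_step \<Phi> N" using k1 by (simp add: c_def mult.assoc)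
  have k2': "(\<lambda>i. d * b i) \<in> rad_step \<Phi> N" using k2 by (simp add: d_def mult.assoc)
  have "refl (\<lambda>i. c * a i) (\<lambda>i. d * b i) \<in> rad_step \<Phi> (Suc N)" using k1' k2' by auto
  hence "(\<lambda>i. d * refl a b i) \<in> rad \<Phi>"
    unfolding refl_scale[OF U_norm[OF cU(1)]] rad_def by blast
  thus ?thesis using cU(2) by (auto simp: Q_def)
qed

lemma Q_base: "\<Phi> \<subseteq> Q \<Phi>"
proof
  fix v assume "v \<in> \<Phi>"
  hence "v \<in> rad \<Phi>" by (auto simp: rad_def intro!: exI[of _ 0])
  hence "(\<lambda>i. 1 * v i) \<in> rad \<Phi>" by simp
  thus "v \<in> Q \<Phi>" using U_one unfolding Q_def by blast
qed

lemma Q_scale: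
  assumes "v \<in> Q \<Phi>" "c \<in> U"
  shows "(\<lambda>i. c * v i) \<in> Q \<Phi>"
proof -
  obtain u where u: "u \<in> U" "(\<lambda>i. u * v i) \<in> rad \<Phi>" using assms(1) by (auto simp: Q_def)
  have e: "cnj c * c = 1" using U_norm[OF assms(2)] .
  have "(\<lambda>i. (u * cnj c) * (c * v i)) = (\<lambda>i. u * v i)"
    by (rule ext) (metis e mult.assoc mult.left_neutral)
  moreover have "u * cnj c \<in> U" using U_mult U_cnj u(1) assms(2) by blast
  ultimately show ?thesis unfolding Q_def mem_Collect_eq
    by (intro bexI[of _ "u * cnj c"]) (use u(2) in simp_all)
qed

lemma rad_Q:
  assumes "\<Psi> \<subseteq> Q \<Phi>" shows "rad \<Psi> \<subseteq> Q \<Phi>"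
proof -
  have "rad_step \<Psi> n \<subseteq> Q \<Phi>" for n
  proof (induction n)
    case 0 thus ?case using assms by simp
  next
    case (Suc n)
    show ?case
    proof
      fix v assume "v \<in> rad_step \<Psi> (Suc n)"
      then obtain a b where "v = refl a b" "a \<in> rad_step \<Psi> n" "b \<in> rad_step \<Psi> n" by auto
      thus "v \<in> Q \<Phi>" using Suc.IH Q_refl by blast
    qed
  qed
  thus ?thesis by (auto simp: rad_def)
qed

lemma equ_main:
  assumes "\<Phi> \<subseteq> \<Psi>" "\<Psi> \<subseteq> Q \<Phi>"
  shows "eq_up_to_units (rad \<Phi>) (rad \<Psi>)"
  unfolding eq_up_to_units_def
proof (intro conjI ballI)
  fix a assume "a \<in> rad \<Phi>"
  hence "a \<in> rad \<Psi>" using rad_mono[OF assms(1)] by blast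
  moreover have "a = (\<lambda>i. 1 * a i)" by simp
  ultimately show "\<exists>u\<in>Eis_units. \<exists>b\<in>rad \<Psi>. a = (\<lambda>i. u * b i)"
    using U_units[OF U_one] by blast
next
  fix b assume "b \<in> rad \<Psi>"
  hence "b \<in> Q \<Phi>" using rad_Q[OF assms(2)] by blast
  then obtain u where u: "u \<in> U" "(\<lambda>i. u * b i) \<in> rad \<Phi>" by (auto simp: Q_def)
  have e: "cnj u * u = 1" using U_norm[OF u(1)] .
  have "b = (\<lambda>i. cnj u * (u * b i))" by (rule ext) (metis e mult.assoc mult.left_neutral)
  thus "\<exists>u\<in>Eis_units. \<exists>a\<in>rad \<Phi>. b = (\<lambda>i. u * a i)"
    by (intro bexI[of _ "cnj u"] bexI[of _ "(\<lambda>i. u * b i)"]) (use u(2) U_units[OF U_cnj[OF u(1)]] in simp_all)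
qed




lemma refl_app: "refl a v i = v i - (1 - omega) * herm a v / herm a a * a i"
  by (simp add: refl_def)

lemma refl_app2: "refl a v i = v i - ((1 - omega) / herm a a) * herm a v * a i"
  by (simp add: refl_def)

lemma refl_lin: "refl a (\<lambda>i. x i - c * y i) = (\<lambda>i. refl a x i - c * refl a y i)"
proof
  fix i
  define k where "k = (1 - omega) / herm a a"
  show "refl a (\<lambda>i. x i - c * y i) i = refl a x i - c * refl a y i"
    unfolding refl_app2 k_def[symmetric] herm_diff2 by (simp add: algebra_simps)
qed

lemma omega_sq': "omega * (omega * x) = - x - omega * x"
  by (simp add: mult.assoc[symmetric] omega_sq algebra_simps)

lemma herm_a_refl:
  assumes "herm a a \<noteq> 0" shows "herm a (refl a v) = omega * herm a v"
proof -
  define k where "k = (1 - omega) / herm a a"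
  have kN: "k * herm a a = 1 - omega" using assms by (simp add: k_def)
  have "refl a v = (\<lambda>i. v i - (k * herm a v) * a i)" by (rule ext) (simp add: refl_app2 k_def)
  hence "herm a (refl a v) = herm a v - (k * herm a v) * herm a a"
    by (simp add: herm_diff2)
  also have "\<dots> = herm a v - (k * herm a a) * herm a v" by (simp add: algebra_simps)
  also have "\<dots> = omega * herm a v" unfolding kN by (simp add: algebra_simps)
  finally show ?thesis .
qed

lemma refl_cube:
  assumes N: "herm a a \<noteq> 0" shows "refl a (refl a (refl a v)) = v"
proof
  fix i
  have h1: "herm a (refl a v) = omega * herm a v" by (rule herm_a_refl[OF N])
  have h2: "herm a (refl a (refl a v)) = omega * (omega * herm a v)"
    using herm_a_refl[OF N, of "refl a v"] h1 by simp
  define k where "k = (1 - omega) / herm a a"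
  have "refl a (refl a (refl a v)) i =
        v i - k * herm a v * a i - k * (omega * herm a v) * a i - k * (omega * (omega * herm a v)) * a i"
    unfolding refl_app2 k_def[symmetric] h1 h2 by simp
  also have "\<dots> = v i - k * herm a v * a i * (1 + omega + omega * omega)"
    by (simp add: algebra_simps)
  also have "\<dots> = v i" by (simp add: omega_sq)
  finally show "refl a (refl a (refl a v)) i = v i" .
qed

lemma t_key: "(1 - omega) / (-3) + cnj ((1 - omega) / (-3)) + 3 * (cnj ((1 - omega) / (-3)) * ((1 - omega) / (-3))) = 0"
  by (simp add: omega_def complex_eq_iff field_simps power2_eq_square)

lemma refl_unitary:
  assumes N: "herm a a = -3" shows "herm (refl a u) (refl a w) = herm u w"
proof -
  define t where "t = (1 - omega) / (-3)"
  have r: "refl a x = (\<lambda>i. x i - (t * herm a x) * a i)" for x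
    by (rule ext) (simp add: refl_app N t_def)
  have hs: "herm u a = cnj (herm a u)" by (rule herm_sym)
  have "herm (refl a u) (refl a w) =
        herm u w - t * herm a w * cnj (herm a u) - cnj (t * herm a u) * (herm a w - t * herm a w * (-3))"
    unfolding r herm_diff1 herm_diff2 hs N by (simp add: algebra_simps)
  also have "\<dots> = herm u w - cnj (herm a u) * herm a w * (t + cnj t + 3 * (cnj t * t))"
    by (simp add: algebra_simps)
  also have "\<dots> = herm u w" using t_key by (simp add: t_def)
  finally show ?thesis .
qed

lemma refl_conj:
  assumes N: "herm a a = -3" and V: "herm v v \<noteq> 0"
  shows "refl (refl a v) = refl a \<circ> (refl v \<circ> (refl a \<circ> refl a))"
proof
  fix w
  have N0: "herm a a \<noteq> 0" using N by simp
  define gi where "gi = refl a (refl a w)"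
  have ggi: "refl a gi = w" unfolding gi_def by (rule refl_cube[OF N0])
  define c where "c = (1 - omega) * herm v gi / herm v v"
  have "refl v gi = (\<lambda>i. gi i - c * v i)" by (rule ext) (simp add: refl_app c_def)
  hence rhs: "(refl a \<circ> (refl v \<circ> (refl a \<circ> refl a))) w = (\<lambda>i. w i - c * refl a v i)"
    by (simp add: gi_def[symmetric] refl_lin ggi)
  have u1: "herm (refl a v) (refl a v) = herm v v" by (rule refl_unitary[OF N])
  have u2: "herm (refl a v) w = herm v gi"
    using refl_unitary[OF N, of v gi] ggi by simp
  show "refl (refl a v) w = (refl a \<circ> (refl v \<circ> (refl a \<circ> refl a))) w"
    unfolding rhs by (rule ext) (simp add: refl_app u1 u2 c_def)
qed

lemma bij_refl: "herm a a \<noteq> 0 \<Longrightarrow> bij (refl a)"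
  by (rule o_bij[of "refl a \<circ> refl a"]) (simp_all add: fun_eq_iff refl_cube)

lemma refl_carrier: "herm a a \<noteq> 0 \<Longrightarrow> refl a \<in> carrier (BijGroup UNIV)"
  using bij_refl by (simp add: BijGroup_def Bij_def extensional_def)

lemma BG_mult:
  "f \<in> carrier (BijGroup UNIV) \<Longrightarrow> g \<in> carrier (BijGroup UNIV) \<Longrightarrow> f \<otimes>\<^bsub>BijGroup UNIV\<^esub> g = f \<circ> g"
  by (simp add: BijGroup_def compose_def fun_eq_iff)

definition P3 :: "vec set \<Rightarrow> vec \<Rightarrow> bool" where
  "P3 \<Phi> v \<longleftrightarrow> v \<in> Q \<Phi> \<and> herm v v = -3 \<and> refl v \<in> generate (BijGroup UNIV) (refl ` \<Phi>)"

lemma P3_refl: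
  assumes a: "P3 \<Phi> a" and v: "P3 \<Phi> v"
  shows "P3 \<Phi> (refl a v)"
proof -
  have Na: "herm a a = -3" and Nv: "herm v v = -3" using a v by (auto simp: P3_def)
  have ca: "refl a \<in> carrier (BijGroup UNIV)" and cv: "refl v \<in> carrier (BijGroup UNIV)"
    using refl_carrier Na Nv by auto
  let ?G = "generate (BijGroup UNIV) (refl ` \<Phi>)"
  have ga: "refl a \<in> ?G" and gv: "refl v \<in> ?G" using a v by (auto simp: P3_def)
  have "refl a \<otimes>\<^bsub>BijGroup UNIV\<^esub> refl a \<in> ?G" by (rule generate.eng[OF ga ga])
  hence "refl v \<otimes>\<^bsub>BijGroup UNIV\<^esub> (refl a \<otimes>\<^bsub>BijGroup UNIV\<^esub> refl a) \<in> ?G" by (rule generate.eng[OF gv])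
  hence "refl a \<otimes>\<^bsub>BijGroup UNIV\<^esub> (refl v \<otimes>\<^bsub>BijGroup UNIV\<^esub> (refl a \<otimes>\<^bsub>BijGroup UNIV\<^esub> refl a)) \<in> ?G"
    by (rule generate.eng[OF ga])
  moreover have "refl a \<otimes>\<^bsub>BijGroup UNIV\<^esub> (refl v \<otimes>\<^bsub>BijGroup UNIV\<^esub> (refl a \<otimes>\<^bsub>BijGroup UNIV\<^esub> refl a))
        = refl a \<circ> (refl v \<circ> (refl a \<circ> refl a))"
  proof -
    interpret G: group "BijGroup (UNIV :: vec set)" by (rule group_BijGroup)
    have m1: "refl a \<otimes>\<^bsub>BijGroup UNIV\<^esub> refl a = refl a \<circ> refl a" by (rule BG_mult[OF ca ca])
    have c1: "refl a \<circ> refl a \<in> carrier (BijGroup UNIV)" using G.m_closed[OF ca ca] m1 by simp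
    have m2: "refl v \<otimes>\<^bsub>BijGroup UNIV\<^esub> (refl a \<circ> refl a) = refl v \<circ> (refl a \<circ> refl a)" by (rule BG_mult[OF cv c1])
    have c2: "refl v \<circ> (refl a \<circ> refl a) \<in> carrier (BijGroup UNIV)" using G.m_closed[OF cv c1] m2 by simp
    show ?thesis unfolding m1 m2 by (rule BG_mult[OF ca c2])
  qed
  ultimately have "refl (refl a v) \<in> ?G" using refl_conj[OF Na] Nv by simp
  moreover have "herm (refl a v) (refl a v) = -3" using refl_unitary[OF Na] Nv by simp
  moreover have "refl a v \<in> Q \<Phi>" using a v Q_refl by (auto simp: P3_def)
  ultimately show ?thesis by (simp add: P3_def)
qed

lemma P3_scale:
  assumes v: "P3 \<Phi> v" and c: "c \<in> U"
  shows "P3 \<Phi> (\<lambda>i. c * v i)"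
proof -
  have cc: "cnj c * c = 1" by (rule U_norm[OF c])
  have "herm (\<lambda>i. c * v i) (\<lambda>i. c * v i) = herm v v" using herm_scale[of c v c v] cc by simp
  moreover have "refl (\<lambda>i. c * v i) = refl v" by (rule refl_unit_arg[OF cc])
  moreover have "(\<lambda>i. c * v i) \<in> Q \<Phi>" using v c Q_scale by (auto simp: P3_def)
  ultimately show ?thesis using v by (simp add: P3_def)
qed

lemma P3_base: "\<forall>r\<in>\<Phi>. herm r r = -3 \<Longrightarrow> r \<in> \<Phi> \<Longrightarrow> P3 \<Phi> r"
  unfolding P3_def using Q_base by (auto intro!: generate.incl imageI)

lemma group_main:
  assumes sub: "\<Phi> \<subseteq> \<Psi>" and N: "\<forall>r\<in>\<Psi>. herm r r = -3" and P: "\<forall>r\<in>\<Psi>. P3 \<Phi> r"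
  shows "refl_group \<Phi> = refl_group \<Psi>"
proof -
  interpret G: group "BijGroup (UNIV :: vec set)" by (rule group_BijGroup)
  have cP: "refl ` \<Phi> \<subseteq> carrier (BijGroup UNIV)" using sub N refl_carrier by auto
  show ?thesis unfolding refl_group_def
  proof
    show "generate (BijGroup UNIV) (refl ` \<Phi>) \<subseteq> generate (BijGroup UNIV) (refl ` \<Psi>)"
      using sub by (intro G.mono_generate) auto
    have "refl ` \<Psi> \<subseteq> generate (BijGroup UNIV) (refl ` \<Phi>)" using P by (auto simp: P3_def)
    thus "generate (BijGroup UNIV) (refl ` \<Psi>) \<subseteq> generate (BijGroup UNIV) (refl ` \<Phi>)"
      by (rule G.generate_subgroup_incl[OF _ G.generate_is_subgroup[OF cP]])
  qed
qed




section \<open>List-level reflections\<close>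

definition rL :: "ep list \<Rightarrow> ep list \<Rightarrow> ep list option" where
  "rL a v = (let P = pmul (1,-1) (hn a v) in
     if length a = 14 \<and> length v = 14 \<and> hn a a = (-9,0) \<and> fst P mod 9 = 0 \<and> snd P mod 9 = 0
     then Some (map2 (\<lambda>x y. padd x (pmul (fst P div 9, snd P div 9) y)) v a) else None)"

lemma ei_scal: "ei (k * a, k * b) = of_int k * ei (a,b)"
  by (simp add: ei_def algebra_simps)

lemma herm_root: "length a = 14 \<Longrightarrow> hn a a = (-9,0) \<Longrightarrow> herm (vL a) (vL a) = -3"
  using herm_vL[of a a] by (simp add: ei_def)

lemma rL_sound:
  assumes "rL a v = Some w"
  shows "refl (vL a) (vL v) = vL w \<and> length w = 14 \<and> length a = 14 \<and> herm (vL a) (vL a) = -3"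
proof -
  define P where "P = pmul (1,-1) (hn a v)"
  define q where "q = (fst P div 9, snd P div 9)"
  have c: "length a = 14" "length v = 14" "hn a a = (-9,0)" "fst P mod 9 = 0" "snd P mod 9 = 0"
    and w: "w = map2 (\<lambda>x y. padd x (pmul q y)) v a"
    using assms by (auto simp: rL_def Let_def P_def q_def split: if_splits)
  have Naa: "herm (vL a) (vL a) = -3" using herm_root c by blast
  have P9: "P = (9 * fst q, 9 * snd q)" using c(4,5) by (auto simp: q_def prod_eq_iff)
  have hav: "herm (vL a) (vL v) = ei (hn a v) / 3" using herm_vL[OF c(1,2)] by (simp add: eq_divide_eq mult.commute)
  have om: "1 - omega = ei (1,-1)" by (simp add: ei_def)
  have "(1 - omega) * ei (hn a v) = ei P" unfolding P_def om by (rule ei_mul)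
  also have "\<dots> = 9 * ei q" unfolding P9 by (simp add: ei_scal[of 9 "fst q" "snd q", simplified])
  finally have key: "(1 - omega) * herm (vL a) (vL v) / herm (vL a) (vL a) = - ei q"
    unfolding hav Naa by (simp add: field_simps)
  have "refl (vL a) (vL v) = vL w"
  proof
    fix i
    show "refl (vL a) (vL v) i = vL w i"
    proof (cases "i < 14")
      case True
      have "refl (vL a) (vL v) i = ei (v!i) + ei q * ei (a!i)"
        unfolding refl_app key using True c by (simp add: vL_def)
      also have "\<dots> = ei (padd (v!i) (pmul q (a!i)))" by (simp add: ei_mul ei_add)
      also have "\<dots> = vL w i" using True c by (simp add: vL_def w)
      finally show ?thesis .
    next
      case False thus ?thesis using c by (simp add: refl_app vL_def w)
    qed
  qed
  moreover have "length w = 14" using c by (simp add: w)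
  ultimately show ?thesis using c Naa by simp
qed

fun chainL :: "ep list \<Rightarrow> ep list list \<Rightarrow> ep list option" where
  "chainL v [] = Some v"
| "chainL v (a#as) = (case rL a v of None \<Rightarrow> None | Some w \<Rightarrow> chainL w as)"

lemma chain_sound:
  "P3 \<Phi> (vL v) \<Longrightarrow> (\<forall>a\<in>set as. P3 \<Phi> (vL a)) \<Longrightarrow> chainL v as = Some w \<Longrightarrow> P3 \<Phi> (vL w)"
proof (induction as arbitrary: v)
  case Nil thus ?case by simp
next
  case (Cons a as)
  then obtain w' where w': "rL a v = Some w'" "chainL w' as = Some w" by (auto split: option.splits)
  have "vL w' = refl (vL a) (vL v)" using rL_sound[OF w'(1)] by simp
  hence "P3 \<Phi> (vL w')" using P3_refl Cons.prems by simp
  thus ?case using Cons.IH Cons.prems w'(2) by simp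
qed

lemma vL_smul: "vL (map (pmul c) w) = (\<lambda>i. ei c * vL w i)"
  by (rule ext) (simp add: vL_def ei_mul)

definition unitsL :: "ep list" where "unitsL = [(1,0),(0,1),(-1,-1),(-1,0),(0,-1),(1,1)]"

lemma unitsL_U: "c \<in> set unitsL \<Longrightarrow> ei c \<in> U"
proof -
  have a: "ei (1,0) = omega ^ 0" "ei (0,1) = omega ^ 1" "ei (-1,-1) = omega ^ 2"
       "ei (-1,0) = - (omega ^ 0)" "ei (0,-1) = - (omega ^ 1)" "ei (1,1) = - (omega ^ 2)"
    by (simp_all add: ei_def power2_eq_square omega_sq)
  have b: "omega ^ 0 \<in> U" "omega ^ 1 \<in> U" "omega ^ 2 \<in> U"
      "- (omega ^ 0) \<in> U" "- (omega ^ 1) \<in> U" "- (omega ^ 2) \<in> U"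
    using U_pow U_neg by blast+
  assume "c \<in> set unitsL"
  thus ?thesis unfolding unitsL_def using a b by (auto simp del: power_0 power_one_right)
qed

fun derok :: "ep list list \<Rightarrow> nat list \<Rightarrow> (nat \<times> nat \<times> nat list \<times> ep) list \<Rightarrow> bool" where
  "derok A kn [] = True"
| "derok A kn ((t,s,st,c)#ds) = (s \<in> set kn \<and> list_all (\<lambda>j. j \<in> set kn) st \<and> c \<in> set unitsL \<and>
     (case chainL (A!s) (map ((!) A) st) of None \<Rightarrow> False | Some w \<Rightarrow> A!t = map (pmul c) w) \<and>
     derok A (t#kn) ds)"

lemma derok_sound:
  "derok A kn ds \<Longrightarrow> (\<forall>k\<in>set kn. P3 \<Phi> (vL (A!k))) \<Longrightarrow> (\<forall>d\<in>set ds. P3 \<Phi> (vL (A!(fst d))))"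
proof (induction ds arbitrary: kn)
  case Nil thus ?case by simp
next
  case (Cons d ds)
  obtain t s st c where d: "d = (t,s,st,c)" by (cases d) auto
  from Cons.prems d obtain w where
    h: "s \<in> set kn" "list_all (\<lambda>j. j \<in> set kn) st" "c \<in> set unitsL"
       "chainL (A!s) (map ((!) A) st) = Some w" "A!t = map (pmul c) w" "derok A (t#kn) ds"
    by (auto split: option.splits)
  have "\<forall>a\<in>set (map ((!) A) st). P3 \<Phi> (vL a)" using h(2) Cons.prems(2) by (auto simp: list_all_iff)
  hence "P3 \<Phi> (vL w)" using chain_sound[OF _ _ h(4)] Cons.prems(2) h(1) by blast
  hence pt: "P3 \<Phi> (vL (A!t))" unfolding h(5) vL_smul using P3_scale unitsL_U[OF h(3)] by blast
  hence "\<forall>k\<in>set (t#kn). P3 \<Phi> (vL (A!k))" using Cons.prems(2) by simp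
  hence "\<forall>d\<in>set ds. P3 \<Phi> (vL (A!(fst d)))" using Cons.IH h(6) by blast
  thus ?case using pt d by simp
qed




fun sumP :: "ep list \<Rightarrow> ep" where
  "sumP [] = (0,0)" | "sumP (z#zs) = padd z (sumP zs)"

lemma sum_sumP: "length zs = n \<Longrightarrow> (\<Sum>i<n. ei (zs!i)) = ei (sumP zs)"
proof (induction zs arbitrary: n)
  case Nil thus ?case by (simp add: ei_zero)
next
  case (Cons z zs)
  then obtain m where n: "n = Suc m" and m: "length zs = m" by auto
  have "(\<Sum>i<Suc m. ei ((z#zs)!i)) = ei ((z#zs)!0) + (\<Sum>i<m. ei ((z#zs)!Suc i))"
    by (rule sum.lessThan_Suc_shift)
  also have "\<dots> = ei z + ei (sumP zs)" using Cons.IH[OF m] by simp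
  finally show ?case unfolding n by (simp add: ei_add)
qed

definition latok :: "ep list \<Rightarrow> (int \<times> int list \<times> ep list \<times> int list \<times> ep) \<Rightarrow> bool" where
  "latok v w = (case w of (m, cs, zs, as, e) \<Rightarrow>
     length v = 14 \<and> length cs = 12 \<and> length zs = 12 \<and> length as = 6 \<and> m \<in> {-1,0,1} \<and>
     list_all (\<lambda>c. c \<in> {-1,0,1}) cs \<and>
     list_all (\<lambda>i. (cs!i - sum_list (map (\<lambda>j. as!j * golay_gen j i) [0..<6])) mod 3 = 0) [0..<12] \<and>
     psub (sumP zs) (m,0) = pmul (1,2) e \<and>
     list_all (\<lambda>i. v!i = padd (m,0) (padd (pmul (1,2) (cs!i,0)) (pmul (3,0) (zs!i)))) [0..<12])"

lemma latok_sound: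
  assumes "latok v (m, cs, zs, as, e)"
  shows "vL v \<in> Lat"
proof -
  have h: "length v = 14" "length cs = 12" "length zs = 12" "length as = 6" "m \<in> {-1,0,1}"
    "\<forall>c\<in>set cs. c \<in> {-1,0,1}"
    "\<forall>i<12. (cs!i - sum_list (map (\<lambda>j. as!j * golay_gen j i) [0..<6])) mod 3 = 0"
    "psub (sumP zs) (m,0) = pmul (1,2) e"
    "\<forall>i<12. v!i = padd (m,0) (padd (pmul (1,2) (cs!i,0)) (pmul (3,0) (zs!i)))"
    using assms by (auto simp: latok_def list_all_iff)
  define c where "c = (\<lambda>i::nat. cs!i)"
  define z where "z = (\<lambda>i::nat. ei (zs!i))"
  have gw: "golay_word c"
    unfolding golay_word_def
  proof (intro exI[of _ "\<lambda>j. as!j"] allI impI)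
    fix i :: nat assume "i < 12"
    moreover have "(\<Sum>j<6. as!j * golay_gen j i) = sum_list (map (\<lambda>j. as!j * golay_gen j i) [0..<6])"
      by (simp add: sum_set_upt_conv_sum_list_nat[symmetric] atLeast0LessThan)
    ultimately show "(c i - (\<Sum>j<6. as!j * golay_gen j i)) mod 3 = 0" using h(7) by (simp add: c_def)
  qed
  have cr: "\<forall>i<12. c i \<in> {-1,0,1}" using h(2,6) by (auto simp: c_def)
  have zE: "\<forall>i<12. z i \<in> Eis" by (simp add: z_def ei_in_Eis)
  have cong: "cong_theta (\<Sum>i<12. z i) (of_int m)"
  proof -
    have "(\<Sum>i<12. z i) = ei (sumP zs)" unfolding z_def using sum_sumP[OF h(3)] .
    hence "(\<Sum>i<12. z i) - of_int m = ei (psub (sumP zs) (m,0))" by (simp add: ei_sub[symmetric] ei_of_int)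
    also have "\<dots> = theta * ei e" unfolding h(8) by (simp add: theta_ei ei_mul)
    finally show ?thesis unfolding cong_theta_def using ei_in_Eis by blast
  qed
  have coord: "\<forall>i<12. vL v i = of_int m + theta * of_int (c i) + 3 * z i"
  proof (intro allI impI)
    fix i :: nat assume i: "i < 12"
    have "vL v i = ei (padd (m,0) (padd (pmul (1,2) (cs!i,0)) (pmul (3,0) (zs!i))))"
      using i h(1,9) by (simp add: vL_def)
    also have "\<dots> = of_int m + theta * of_int (c i) + 3 * z i"
      by (simp only: ei_add[symmetric] ei_mul[symmetric] theta_ei[symmetric] ei_of_int) (simp add: c_def z_def)
    finally show "vL v i = of_int m + theta * of_int (c i) + 3 * z i" .
  qed
  have "vL v \<in> leech" unfolding leech_def
    using h(5) cr gw zE cong coord by blast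
  moreover have "vL v 12 \<in> Eis" "vL v 13 \<in> Eis" using h(1) by (simp_all add: vL_def ei_in_Eis)
  moreover have "\<forall>i\<ge>14. vL v i = 0" using h(1) by (simp add: vL_def)
  ultimately show ?thesis unfolding Lat_def by blast
qed




definition pts :: "(int \<times> int \<times> int) list" where "pts = [(0,0,1), (0,1,0), (1,0,0), (1,1,1), (0,1,2), (1,2,2), (0,1,1), (1,2,0), (1,1,0), (1,0,2), (1,2,1), (1,1,2), (1,0,1)]"

definition lns :: "(int \<times> int \<times> int) list" where "lns = [(1,0,0), (0,1,0), (1,2,0), (1,1,0), (0,0,1), (1,0,2), (1,0,1), (0,1,2), (0,1,1), (1,1,1), (1,2,2), (1,1,2), (1,2,1)]"

definition xv :: "ep list list" where "xv = [
  [(9,-4), (-1,-6), (6,2), (6,2), (6,2), (-1,3), (-1,0), (-4,-6), (0,-4), (5,-6), (-9,-4), (-1,9), (-3,3), (-6,-14)],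
  [(7,-38), (-16,-21), (15,-10), (15,-10), (15,-10), (8,18), (-1,0), (-24,-16), (-11,-14), (-12,-40), (-23,10), (27,44), (4,20), (-53,-43)],
  [(-26,-8), (-3,8), (-15,-10), (-12,-10), (-12,-10), (7,-2), (-1,0), (2,12), (-3,5), (-18,2), (17,15), (13,-11), (10,0), (0,26)],
  [(-26,-8), (-3,8), (-12,-10), (-15,-10), (-12,-10), (7,-2), (-1,0), (2,12), (-3,5), (-18,2), (17,15), (13,-11), (10,0), (0,26)],
  [(-26,-8), (-3,8), (-12,-10), (-12,-10), (-15,-10), (7,-2), (-1,0), (2,12), (-3,5), (-18,2), (17,15), (13,-11), (10,0), (0,26)],
  [(0,23), (10,10), (-6,8), (-6,8), (-6,8), (-6,-10), (-1,0), (15,8), (7,7), (11,24), (11,-9), (-17,-23), (-4,-12), (30,20)],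
  [(-24,-7), (-4,6), (-12,-10), (-12,-10), (-12,-10), (5,-3), (-1,0), (2,12), (-3,5), (-16,3), (15,14), (11,-9), (9,0), (0,24)],
  [(-23,-5), (-3,8), (-13,-9), (-13,-9), (-13,-9), (4,-5), (-1,0), (3,11), (-3,5), (-17,4), (17,12), (11,-12), (9,-1), (3,26)],
  [(-19,-9), (-5,4), (-8,-8), (-8,-8), (-8,-8), (6,-1), (-1,0), (-2,7), (-3,2), (-15,-1), (10,13), (14,-3), (8,2), (-5,16)],
  [(-1,24), (9,11), (-8,7), (-8,7), (-8,7), (-5,-11), (-1,0), (14,9), (7,10), (9,23), (12,-7), (-17,-26), (-3,-12), (31,23)],
  [(-29,-5), (-3,11), (-17,-11), (-17,-11), (-17,-11), (7,-5), (-1,0), (4,16), (-3,5), (-19,6), (20,15), (12,-16), (11,-2), (4,33)],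
  [(-7,18), (6,11), (-10,3), (-10,3), (-10,3), (-2,-8), (-1,0), (13,10), (4,7), (2,21), (15,-1), (-12,-25), (0,-10), (26,26)],
  [(-25,-15), (-8,4), (-10,-12), (-10,-12), (-10,-12), (9,2), (-1,0), (-3,11), (-6,2), (-22,-6), (13,16), (19,-2), (11,4), (-10,19)]]"

definition lv :: "ep list list" where "lv = [
  [(-14,-26), (-13,-6), (-1,-12), (-1,-12), (1,-11), (9,8), (2,0), (-12,-1), (-8,-5), (-19,-21), (-1,15), (24,17), (9,11), (-29,-6)],
  [(10,-41), (-17,-23), (20,-9), (18,-10), (18,-10), (7,19), (2,0), (-26,-20), (-11,-17), (-11,-44), (-28,9), (27,50), (3,22), (-58,-51)],
  [(10,-41), (-17,-23), (18,-10), (20,-9), (18,-10), (7,19), (2,0), (-27,-19), (-12,-16), (-10,-45), (-27,8), (27,50), (3,22), (-58,-51)],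
  [(14,-45), (-19,-27), (23,-9), (23,-9), (23,-9), (8,24), (2,0), (-31,-24), (-13,-18), (-10,-51), (-34,9), (29,57), (2,25), (-65,-60)],
  [(3,-16), (-7,-9), (8,-3), (6,-4), (6,-4), (3,8), (2,0), (-10,-6), (-4,-6), (-3,-16), (-10,3), (9,17), (1,8), (-21,-18)],
  [(9,-10), (-4,-9), (8,0), (10,1), (8,0), (0,5), (2,0), (-7,-9), (-2,-5), (2,-12), (-12,-1), (4,16), (-2,6), (-15,-20)],
  [(-8,-65), (-27,-25), (15,-22), (15,-22), (15,-22), (16,25), (2,0), (-37,-18), (-18,-19), (-30,-61), (-25,24), (49,61), (12,31), (-80,-48)],
  [(33,-31), (-14,-29), (29,0), (29,0), (27,-1), (2,21), (2,0), (-28,-30), (-8,-20), (5,-45), (-41,-5), (15,56), (-6,21), (-54,-70)],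
  [(40,-26), (-10,-30), (33,5), (31,4), (33,5), (-2,19), (2,0), (-26,-32), (-6,-19), (13,-41), (-44,-11), (8,57), (-10,19), (-49,-75)],
  [(34,-32), (-13,-30), (29,0), (31,1), (31,1), (1,22), (2,0), (-28,-30), (-7,-21), (7,-44), (-43,-6), (13,58), (-7,21), (-55,-73)],
  [(26,-30), (-12,-25), (23,-3), (23,-3), (25,-2), (2,18), (2,0), (-24,-25), (-8,-17), (3,-40), (-35,-2), (14,48), (-4,19), (-49,-60)],
  [(32,-27), (-9,-25), (27,2), (27,2), (27,2), (1,19), (2,0), (-24,-28), (-5,-17), (10,-38), (-39,-7), (11,51), (-7,18), (-47,-66)],
  [(32,-33), (-12,-28), (29,0), (29,0), (29,0), (1,22), (2,0), (-26,-29), (-8,-20), (5,-45), (-39,-4), (15,56), (-6,21), (-54,-70)]]"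

definition wits :: "(int \<times> int list \<times> ep list \<times> int list \<times> ep) list" where "wits = [
  (-1, [1, 0, 1, 1, 1, 0, 0, 0, 1, 0, 1, 0], [(3,-2), (0,-2), (2,0), (2,0), (2,0), (0,1), (0,0), (-1,-2), (0,-2), (2,-2), (-3,-2), (0,3)], [1, 0, 1, 1, 1, 0], (-8,-8)),
  (-1, [-1, 0, 1, 1, 1, 0, 0, 1, -1, 1, -1, 1], [(3,-12), (-5,-7), (5,-4), (5,-4), (5,-4), (3,6), (0,0), (-8,-6), (-3,-4), (-4,-14), (-7,4), (9,14)], [2, 0, 1, 1, 1, 0], (-22,-13)),
  (-1, [-1, 1, 1, 1, 1, -1, 0, 0, 1, 1, 0, -1], [(-8,-2), (-1,2), (-5,-4), (-4,-4), (-4,-4), (3,0), (0,0), (1,4), (-1,1), (-6,0), (6,5), (5,-3)], [2, 1, 1, 1, 1, 2], (1,7)),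
  (-1, [-1, 1, 1, 1, 1, -1, 0, 0, 1, 1, 0, -1], [(-8,-2), (-1,2), (-4,-4), (-5,-4), (-4,-4), (3,0), (0,0), (1,4), (-1,1), (-6,0), (6,5), (5,-3)], [2, 1, 1, 1, 1, 2], (1,7)),
  (-1, [-1, 1, 1, 1, 1, -1, 0, 0, 1, 1, 0, -1], [(-8,-2), (-1,2), (-4,-4), (-4,-4), (-5,-4), (3,0), (0,0), (1,4), (-1,1), (-6,0), (6,5), (5,-3)], [2, 1, 1, 1, 1, 2], (1,7)),
  (-1, [1, -1, 1, 1, 1, 1, 0, 1, -1, 0, 0, -1], [(0,7), (4,4), (-2,2), (-2,2), (-2,2), (-2,-4), (0,0), (5,2), (3,3), (4,8), (4,-3), (-5,-7)], [1, 2, 1, 1, 1, 1], (8,0)),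
  (-1, [1, 0, 1, 1, 1, 0, 0, 0, 1, 0, 1, 0], [(-8,-3), (-1,2), (-4,-4), (-4,-4), (-4,-4), (2,-1), (0,0), (1,4), (-1,1), (-5,1), (5,4), (4,-3)], [1, 0, 1, 1, 1, 0], (0,7)),
  (-1, [-1, 1, 0, 0, 0, -1, 0, 1, 1, -1, 0, 0], [(-7,-1), (-1,2), (-4,-3), (-4,-3), (-4,-3), (2,-1), (0,0), (1,3), (-1,1), (-5,2), (6,4), (4,-4)], [2, 1, 0, 0, 0, 2], (2,7)),
  (-1, [0, -1, -1, -1, -1, 1, 0, -1, 1, 1, -1, 0], [(-6,-3), (-1,2), (-2,-2), (-2,-2), (-2,-2), (2,-1), (0,0), (0,3), (-1,0), (-5,-1), (4,5), (5,-1)], [0, 2, 2, 2, 2, 1], (1,4)),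
  (-1, [0, 1, -1, -1, -1, -1, 0, 0, -1, 1, 1, -1], [(0,8), (3,3), (-2,3), (-2,3), (-2,3), (-1,-3), (0,0), (5,3), (3,4), (3,7), (4,-3), (-5,-8)], [0, 1, 2, 2, 2, 2], (11,2)),
  (-1, [-1, 1, -1, -1, -1, -1, 0, -1, 1, 0, 0, 1], [(-9,-1), (-1,3), (-5,-3), (-5,-3), (-5,-3), (3,-1), (0,0), (2,6), (-1,1), (-6,2), (7,5), (4,-6)], [2, 1, 2, 2, 2, 2], (5,10)),
  (-1, [0, 1, 0, 0, 0, -1, 0, -1, -1, 0, 1, 1], [(-2,6), (2,3), (-3,1), (-3,1), (-3,1), (0,-2), (0,0), (5,4), (2,3), (1,7), (5,-1), (-4,-9)], [0, 1, 0, 0, 0, 2], (9,4)),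
  (-1, [0, -1, 0, 0, 0, 1, 0, 1, 1, 0, -1, -1], [(-8,-5), (-2,2), (-3,-4), (-3,-4), (-3,-4), (3,0), (0,0), (-1,3), (-2,0), (-7,-2), (5,6), (7,0)], [0, 2, 0, 0, 0, 1], (-1,6)),
  (-1, [-1, 0, 0, 0, -1, 1, 0, 1, -1, 0, 0, 1], [(-4,-8), (-4,-2), (0,-4), (0,-4), (1,-3), (3,2), (1,0), (-4,-1), (-2,-1), (-6,-7), (0,5), (8,5)], [2, 0, 0, 0, 2, 1], (-10,-2)),
  (-1, [-1, -1, 0, 1, 1, -1, 0, -1, -1, -1, 0, 1], [(4,-13), (-5,-7), (7,-3), (6,-4), (6,-4), (3,7), (1,0), (-8,-6), (-3,-5), (-3,-14), (-9,3), (9,16)], [2, 2, 0, 1, 1, 2], (-23,-16)),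
  (-1, [-1, -1, 1, 0, 1, -1, 0, 1, 1, 0, 1, 1], [(4,-13), (-5,-7), (6,-4), (7,-3), (6,-4), (3,7), (1,0), (-9,-7), (-4,-6), (-3,-15), (-9,2), (9,16)], [2, 2, 1, 0, 1, 2], (-25,-16)),
  (-1, [0, 0, 0, 0, 0, 0, 0, 0, 0, 0, 0, 0], [(5,-15), (-6,-9), (8,-3), (8,-3), (8,-3), (3,8), (1,0), (-10,-8), (-4,-6), (-3,-17), (-11,3), (10,19)], [0, 0, 0, 0, 0, 0], (-26,-18)),
  (-1, [1, 0, 0, 1, 1, 1, 0, 0, 0, 1, 0, 1], [(1,-6), (-2,-3), (3,-1), (2,-2), (2,-2), (1,2), (1,0), (-3,-2), (-1,-2), (-1,-6), (-3,1), (3,5)], [1, 0, 0, 1, 1, 1], (-12,-8)),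
  (-1, [1, 0, 0, -1, 0, 1, 0, 0, -1, 0, 1, -1], [(3,-4), (-1,-3), (3,0), (4,1), (3,0), (0,1), (1,0), (-2,-3), (0,-1), (1,-4), (-4,-1), (2,6)], [1, 0, 0, 2, 0, 1], (-9,-10)),
  (-1, [-1, 1, 1, 1, 1, -1, 0, 0, 1, 1, 0, -1], [(-2,-21), (-9,-9), (5,-8), (5,-8), (5,-8), (6,9), (1,0), (-12,-6), (-6,-7), (-10,-21), (-8,8), (17,21)], [2, 1, 1, 1, 1, 2], (-31,-12)),
  (-1, [1, -1, 0, 0, 1, 0, 0, 0, -1, 0, -1, 1], [(11,-11), (-4,-9), (10,0), (10,0), (9,-1), (1,7), (1,0), (-9,-10), (-2,-6), (2,-15), (-13,-1), (5,18)], [1, 2, 0, 0, 1, 0], (-26,-24)),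
  (-1, [-1, 0, 1, -1, 1, -1, 0, -1, 1, -1, -1, 0], [(14,-8), (-3,-10), (11,1), (11,2), (11,1), (0,7), (1,0), (-8,-10), (-2,-7), (5,-13), (-14,-3), (3,19)], [2, 0, 1, 2, 1, 2], (-24,-27)),
  (-1, [-1, 0, 0, -1, -1, -1, 0, 0, 0, -1, 0, -1], [(12,-10), (-4,-10), (10,0), (11,1), (11,1), (1,8), (1,0), (-9,-10), (-2,-7), (3,-14), (-14,-2), (5,20)], [2, 0, 0, 2, 2, 2], (-24,-25)),
  (-1, [0, 1, 0, 0, -1, 0, 0, 1, -1, 1, -1, 0], [(9,-10), (-4,-9), (8,-1), (8,-1), (9,0), (1,6), (1,0), (-8,-9), (-2,-5), (1,-14), (-11,0), (5,16)], [0, 1, 0, 0, 2, 0], (-24,-21)),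
  (-1, [0, 1, 1, 1, 1, -1, 0, 1, -1, -1, 1, 0], [(11,-9), (-3,-9), (9,0), (9,0), (9,0), (1,7), (1,0), (-8,-10), (-1,-5), (4,-12), (-13,-3), (4,17)], [0, 1, 1, 1, 1, 2], (-24,-24)),
  (-1, [0, 1, 0, 0, 0, -1, 0, -1, -1, 0, 1, 1], [(11,-11), (-4,-10), (10,0), (10,0), (10,0), (1,8), (1,0), (-8,-9), (-2,-6), (2,-15), (-13,-2), (5,18)], [0, 1, 0, 0, 0, 2], (-26,-25))]"

definition fl :: "((int \<times> int \<times> int) + (int \<times> int \<times> int)) list" where "fl = [Inl (0,0,1), Inr (1,0,0), Inl (0,1,0), Inr (1,0,1), Inl (1,2,2), Inr (1,2,2), Inr (0,1,0), Inl (1,0,0), Inr (0,1,1), Inl (1,2,1), Inr (1,2,1), Inr (1,2,0), Inl (1,1,1), Inr (1,1,1), Inl (1,2,0), Inr (1,1,2)]"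

definition sv :: "ep list list" where "sv = [
  [(9,-4), (-1,-6), (6,2), (6,2), (6,2), (-1,3), (-1,0), (-4,-6), (0,-4), (5,-6), (-9,-4), (-1,9), (-3,3), (-6,-14)],
  [(-14,-26), (-13,-6), (-1,-12), (-1,-12), (1,-11), (9,8), (2,0), (-12,-1), (-8,-5), (-19,-21), (-1,15), (24,17), (9,11), (-29,-6)],
  [(7,-38), (-16,-21), (15,-10), (15,-10), (15,-10), (8,18), (-1,0), (-24,-16), (-11,-14), (-12,-40), (-23,10), (27,44), (4,20), (-53,-43)],
  [(-8,-65), (-27,-25), (15,-22), (15,-22), (15,-22), (16,25), (2,0), (-37,-18), (-18,-19), (-30,-61), (-25,24), (49,61), (12,31), (-80,-48)],
  [(0,23), (10,10), (-6,8), (-6,8), (-6,8), (-6,-10), (-1,0), (15,8), (7,7), (11,24), (11,-9), (-17,-23), (-4,-12), (30,20)],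
  [(26,-30), (-12,-25), (23,-3), (23,-3), (25,-2), (2,18), (2,0), (-24,-25), (-8,-17), (3,-40), (-35,-2), (14,48), (-4,19), (-49,-60)],
  [(10,-41), (-17,-23), (20,-9), (18,-10), (18,-10), (7,19), (2,0), (-26,-20), (-11,-17), (-11,-44), (-28,9), (27,50), (3,22), (-58,-51)],
  [(-26,-8), (-3,8), (-15,-10), (-12,-10), (-12,-10), (7,-2), (-1,0), (2,12), (-3,5), (-18,2), (17,15), (13,-11), (10,0), (0,26)],
  [(40,-26), (-10,-30), (33,5), (31,4), (33,5), (-2,19), (2,0), (-26,-32), (-6,-19), (13,-41), (-44,-11), (8,57), (-10,19), (-49,-75)],
  [(-29,-5), (-3,11), (-17,-11), (-17,-11), (-17,-11), (7,-5), (-1,0), (4,16), (-3,5), (-19,6), (20,15), (12,-16), (11,-2), (4,33)],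
  [(32,-33), (-12,-28), (29,0), (29,0), (29,0), (1,22), (2,0), (-26,-29), (-8,-20), (5,-45), (-39,-4), (15,56), (-6,21), (-54,-70)],
  [(10,-41), (-17,-23), (18,-10), (20,-9), (18,-10), (7,19), (2,0), (-27,-19), (-12,-16), (-10,-45), (-27,8), (27,50), (3,22), (-58,-51)],
  [(-26,-8), (-3,8), (-12,-10), (-15,-10), (-12,-10), (7,-2), (-1,0), (2,12), (-3,5), (-18,2), (17,15), (13,-11), (10,0), (0,26)],
  [(34,-32), (-13,-30), (29,0), (31,1), (31,1), (1,22), (2,0), (-28,-30), (-7,-21), (7,-44), (-43,-6), (13,58), (-7,21), (-55,-73)],
  [(-23,-5), (-3,8), (-13,-9), (-13,-9), (-13,-9), (4,-5), (-1,0), (3,11), (-3,5), (-17,4), (17,12), (11,-12), (9,-1), (3,26)],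
  [(32,-27), (-9,-25), (27,2), (27,2), (27,2), (1,19), (2,0), (-24,-28), (-5,-17), (10,-38), (-39,-7), (11,51), (-7,18), (-47,-66)]]"

definition sidx :: "nat list" where "sidx = [0, 13, 1, 19, 5, 23, 14, 2, 21, 10, 25, 15, 3, 22, 7, 24]"

definition ders :: "(nat \<times> nat \<times> nat list \<times> ep) list" where "ders = [
  (6, 0, [14, 14, 15, 3, 22, 7, 24, 2, 2, 21, 21, 10, 10, 25, 25], (1,0)),
  (8, 0, [13, 13, 14, 2, 21, 10, 25, 1, 1, 19, 19, 5, 5, 23, 23], (1,0)),
  (12, 0, [13, 13, 15, 3, 22, 7, 24, 1, 1, 19, 19, 5, 5, 23, 23], (1,0)),
  (4, 25, [6, 24, 7, 22, 8, 8, 15, 15, 0, 0, 14, 14, 2, 2, 21, 21], (0,-1)),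
  (9, 23, [8, 8, 15, 15, 12, 24, 7, 22, 0, 0, 13, 13, 1, 1, 19, 19], (0,-1)),
  (11, 23, [8, 25, 10, 21, 12, 12, 14, 14, 0, 0, 13, 13, 1, 1, 19, 19], (0,-1)),
  (16, 14, [2, 21, 10, 12, 12, 24, 24, 6, 6, 13, 13, 1, 1, 19, 19, 5, 5], (0,-1)),
  (17, 0, [14, 14, 15, 3, 22, 7, 12, 12, 23, 23, 5, 5, 19, 19, 1, 1], (1,0)),
  (18, 0, [14, 2, 21, 10, 15, 15, 8, 8, 23, 23, 5, 5, 19, 19, 1, 1], (1,0)),
  (20, 0, [14, 12, 24, 7, 22, 3, 13, 13, 1, 1, 19, 19, 5, 5], (1,1))]"

definition A26 :: "ep list list" where "A26 = xv @ lv"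
definition xf :: "int \<times> int \<times> int \<Rightarrow> vec" where "xf p = vL (the (map_of (zip pts xv) p))"
definition lf :: "int \<times> int \<times> int \<Rightarrow> vec" where "lf m = vL (the (map_of (zip lns lv) m))"

lemma chk_basic: "distinct pts \<and> distinct lns \<and> length xv = 13 \<and> length lv = 13 \<and> length pts = 13 \<and> length lns = 13
   \<and> set lns = set pts"
  by code_simp

lemma P2_eq: "P2 = set pts"
  by (auto simp: P2_def pts_def)

lemma chk_lat: "list_all2 latok A26 wits" by code_simp
lemma chk_norm: "list_all (\<lambda>v. length v = 14 \<and> hn v v = (-9,0)) A26" by code_simp
lemma chk_xx: "list_all (\<lambda>i. list_all (\<lambda>j. i = j \<or> hn (xv!i) (xv!j) = (0,0)) [0..<13]) [0..<13]" by code_simp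
lemma chk_ll: "list_all (\<lambda>i. list_all (\<lambda>j. i = j \<or> hn (lv!i) (lv!j) = (0,0)) [0..<13]) [0..<13]" by code_simp
lemma chk_xl: "list_all (\<lambda>i. list_all (\<lambda>j. hn (xv!i) (lv!j) = (if incident (pts!i) (lns!j) then (6,3) else (0,0))) [0..<13]) [0..<13]"
  by code_simp
lemma chk_fl: "distinct fl \<and> length fl = 16 \<and> length sidx = 16 \<and> list_all (\<lambda>k. k < 26) sidx \<and>
   list_all (\<lambda>v. case v of Inl p \<Rightarrow> p \<in> set pts | Inr m \<Rightarrow> m \<in> set lns) fl \<and>
   list_all (\<lambda>i. (case fl!i of Inl p \<Rightarrow> the (map_of (zip pts xv) p) | Inr m \<Rightarrow> the (map_of (zip lns lv) m)) = A26!(sidx!i)) [0..<16]"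
  by code_simp
lemma chk_adj: "list_all (\<lambda>i. list_all (\<lambda>j. m666_adj i j = inc_adj (fl!i) (fl!j)) [0..<16]) [0..<16]"
  by code_simp
lemma chk_der: "derok A26 sidx ders \<and> list_all (\<lambda>k. k \<in> set sidx \<or> k \<in> set (map fst ders)) [0..<26]"
  by code_simp




lemma herm_from_hn:
  assumes "length a = 14" "length b = 14" "hn a b = (3*x, 3*y)"
  shows "herm (vL a) (vL b) = ei (x,y)"
proof -
  have "3 * herm (vL a) (vL b) = ei (3*x, 3*y)" using herm_vL[OF assms(1,2)] assms(3) by simp
  also have "\<dots> = 3 * ei (x,y)" using ei_scal[of 3 x y] by simp
  finally show ?thesis by simp
qed

lemma len14: "v \<in> set A26 \<Longrightarrow> length v = 14" and nrm9: "v \<in> set A26 \<Longrightarrow> hn v v = (-9,0)"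
  using chk_norm by (auto simp: list_all_iff)

lemma A26_nth: "i < 13 \<Longrightarrow> xv!i \<in> set A26" "i < 13 \<Longrightarrow> lv!i \<in> set A26"
  using chk_basic by (auto simp: A26_def)

lemma xf_nth: "i < 13 \<Longrightarrow> xf (pts!i) = vL (xv!i)"
  using chk_basic map_of_zip_nth[of pts xv i] by (simp add: xf_def)
lemma lf_nth: "i < 13 \<Longrightarrow> lf (lns!i) = vL (lv!i)"
  using chk_basic map_of_zip_nth[of lns lv i] by (simp add: lf_def)

lemma P2_pts: "p \<in> P2 \<Longrightarrow> \<exists>i<13. p = pts!i"
  using chk_basic by (auto simp: P2_eq in_set_conv_nth)
lemma P2_lns: "p \<in> P2 \<Longrightarrow> \<exists>i<13. p = lns!i"
  using chk_basic by (metis P2_eq in_set_conv_nth)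

lemma A26_Lat: "v \<in> set A26 \<Longrightarrow> vL v \<in> Lat"
proof -
  assume "v \<in> set A26"
  then obtain w where "latok v w" using chk_lat by (metis in_set_conv_nth list_all2_conv_all_nth)
  thus ?thesis by (cases w) (auto intro: latok_sound)
qed

lemma root_A26: "v \<in> set A26 \<Longrightarrow> is_root (vL v)"
  unfolding is_root_def using A26_Lat herm_from_hn[of v v "-3" 0] len14 nrm9 by (simp add: ei_def)

lemma mwt: "ei (2,1) = - omega * theta"
proof -
  have "- omega * theta = - omega - 2 * (omega * omega)" by (simp add: theta_eq algebra_simps)
  also have "\<dots> = ei (2,1)" by (simp add: omega_sq ei_def)
  finally show ?thesis by simp
qed

lemma Dconf: "D_config xf lf"
  unfolding D_config_def
proof (intro conjI ballI impI)
  fix p assume "p \<in> P2" then obtain i where "i < 13" "p = pts!i" using P2_pts by blast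
  thus "is_root (xf p)" using xf_nth root_A26 A26_nth by simp
next
  fix m assume "m \<in> P2" then obtain i where "i < 13" "m = lns!i" using P2_lns by blast
  thus "is_root (lf m)" using lf_nth root_A26 A26_nth by simp
next
  fix p p' assume "p \<in> P2" "p' \<in> P2" "p \<noteq> p'"
  then obtain i j where ij: "i < 13" "j < 13" "p = pts!i" "p' = pts!j" "i \<noteq> j" using P2_pts by blast
  moreover have "\<forall>i<13. \<forall>j<13. i = j \<or> hn (xv!i) (xv!j) = (0,0)" using chk_xx by (auto simp: list_all_iff)
  ultimately have "hn (xv!i) (xv!j) = (0,0)" by blast
  hence "hn (xv!i) (xv!j) = (3*0, 3*0)" by simp
  thus "herm (xf p) (xf p') = 0" using ij xf_nth herm_from_hn len14 A26_nth by (simp add: ei_zero)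
next
  fix p p' assume "p \<in> P2" "p' \<in> P2" "p \<noteq> p'"
  then obtain i j where ij: "i < 13" "j < 13" "p = lns!i" "p' = lns!j" "i \<noteq> j" using P2_lns by blast
  moreover have "\<forall>i<13. \<forall>j<13. i = j \<or> hn (lv!i) (lv!j) = (0,0)" using chk_ll by (auto simp: list_all_iff)
  ultimately have "hn (lv!i) (lv!j) = (0,0)" by blast
  hence "hn (lv!i) (lv!j) = (3*0, 3*0)" by simp
  thus "herm (lf p) (lf p') = 0" using ij lf_nth herm_from_hn len14 A26_nth by (simp add: ei_zero)
next
  fix p m assume "p \<in> P2" "m \<in> P2"
  then obtain i j where ij: "i < 13" "j < 13" "p = pts!i" "m = lns!j" using P2_pts P2_lns by blast
  have "\<forall>i<13. \<forall>j<13. hn (xv!i) (lv!j) = (if incident (pts!i) (lns!j) then (6,3) else (0,0))"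
    using chk_xl by (auto simp: list_all_iff)
  hence h: "hn (xv!i) (lv!j) = (if incident p m then (3*2, 3*1) else (3*0, 3*0))"
    using ij by simp
  show "herm (xf p) (lf m) = (if incident p m then - omega * theta else 0)"
  proof (cases "incident p m")
    case True thus ?thesis using h ij xf_nth lf_nth herm_from_hn len14 A26_nth mwt by simp
  next
    case False thus ?thesis using h ij xf_nth lf_nth herm_from_hn len14 A26_nth by (simp add: ei_zero)
  qed
qed




lemma fl_root: "i < 16 \<Longrightarrow> D_root xf lf (fl!i) = vL (A26!(sidx!i))"
proof -
  assume i: "i < 16"
  have "\<forall>i<16. (case fl!i of Inl p \<Rightarrow> the (map_of (zip pts xv) p) | Inr m \<Rightarrow> the (map_of (zip lns lv) m)) = A26!(sidx!i)"
    using chk_fl by (auto simp: list_all_iff)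
  hence e: "(case fl!i of Inl p \<Rightarrow> the (map_of (zip pts xv) p) | Inr m \<Rightarrow> the (map_of (zip lns lv) m)) = A26!(sidx!i)"
    using i by blast
  show ?thesis
  proof (cases "fl!i")
    case (Inl p) thus ?thesis using e by (simp add: xf_def)
  next
    case (Inr m) thus ?thesis using e by (simp add: lf_def)
  qed
qed

lemma img_nth: "f ` set xs = (\<lambda>i. f (xs!i)) ` {..<length xs}"
proof -
  have "set xs = (!) xs ` {..<length xs}"
    by (metis atLeast0LessThan map_nth set_map set_upt)
  thus ?thesis by (simp add: image_image)
qed

lemma Droot_S: "D_root xf lf ` set fl = (\<lambda>k. vL (A26!k)) ` set sidx"
proof -
  have l: "length fl = 16" "length sidx = 16" using chk_fl by auto
  have "D_root xf lf ` set fl = (\<lambda>i. D_root xf lf (fl!i)) ` {..<16}"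
    using img_nth[of "D_root xf lf" fl] l by simp
  also have "\<dots> = (\<lambda>i. vL (A26!(sidx!i))) ` {..<16}" using fl_root by (intro image_cong) auto
  also have "\<dots> = (\<lambda>k. vL (A26!k)) ` set sidx"
    using img_nth[of "\<lambda>k. vL (A26!k)" sidx] l by simp
  finally show ?thesis .
qed

lemma xf_img: "xf ` P2 = vL ` set xv"
proof -
  have l: "length pts = 13" "length xv = 13" using chk_basic by auto
  have "xf ` P2 = (\<lambda>i. xf (pts!i)) ` {..<13}" unfolding P2_eq using img_nth[of xf pts] l by simp
  also have "\<dots> = (\<lambda>i. vL (xv!i)) ` {..<13}" using xf_nth by (intro image_cong) auto
  also have "\<dots> = vL ` set xv" using img_nth[of vL xv] l by simp
  finally show ?thesis .
qed

lemma lf_img: "lf ` P2 = vL ` set lv"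
proof -
  have l: "length lns = 13" "length lv = 13" "P2 = set lns" using chk_basic P2_eq by auto
  have "lf ` P2 = (\<lambda>i. lf (lns!i)) ` {..<13}" unfolding l(3) using img_nth[of lf lns] l by simp
  also have "\<dots> = (\<lambda>i. vL (lv!i)) ` {..<13}" using lf_nth by (intro image_cong) auto
  also have "\<dots> = vL ` set lv" using img_nth[of vL lv] l by simp
  finally show ?thesis .
qed

lemma Droot_V: "D_root xf lf ` D_vertices = vL ` set A26"
proof -
  have "D_root xf lf ` D_vertices = xf ` P2 \<union> lf ` P2"
    unfolding D_vertices_def by (simp add: image_Un image_image)
  thus ?thesis using xf_img lf_img by (auto simp: A26_def)
qed

lemma sidx_lt: "k \<in> set sidx \<Longrightarrow> k < length A26"
  using chk_fl chk_basic by (auto simp: list_all_iff A26_def)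

lemma all_P3:
  defines "\<Phi> \<equiv> (\<lambda>k. vL (A26!k)) ` set sidx"
  shows "\<forall>r\<in>vL ` set A26. P3 \<Phi> r"
proof -
  have N: "\<forall>r\<in>\<Phi>. herm r r = -3"
    unfolding \<Phi>_def using sidx_lt len14 nrm9 herm_root by (auto simp: nth_mem)
  have b: "\<forall>k\<in>set sidx. P3 \<Phi> (vL (A26!k))" using P3_base[OF N] by (auto simp: \<Phi>_def)
  have d: "\<forall>d\<in>set ders. P3 \<Phi> (vL (A26!(fst d)))"
    using derok_sound[OF _ b] chk_der by blast
  have cov: "\<forall>k<26. k \<in> set sidx \<or> k \<in> fst ` set ders" using chk_der by (auto simp: list_all_iff)
  have len: "length A26 = 26" using chk_basic by (simp add: A26_def)
  show ?thesis
  proof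
    fix r assume "r \<in> vL ` set A26"
    then obtain k where k: "k < 26" "r = vL (A26!k)" using len by (auto simp: in_set_conv_nth)
    thus "P3 \<Phi> r" using cov b d by auto
  qed
qed

theorem mainTheorem10:
  shows "\<exists>x l S. D_config x l \<and> S \<subseteq> D_vertices \<and> card S = 16 \<and>
     (\<exists>f. bij_betw f {0..<16} S \<and>
          (\<forall>i\<in>{0..<16}. \<forall>j\<in>{0..<16}. m666_adj i j \<longleftrightarrow> inc_adj (f i) (f j))) \<and>
     eq_up_to_units (rad (D_root x l ` S)) (rad (D_root x l ` D_vertices)) \<and>
     refl_group (D_root x l ` S) = refl_group (D_root x l ` D_vertices)"
proof (intro exI conjI)
  show "D_config xf lf" by (rule Dconf)
  have fl: "distinct fl" "length fl = 16" using chk_fl by auto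
  show "set fl \<subseteq> D_vertices"
  proof
    fix v assume "v \<in> set fl"
    hence "case v of Inl p \<Rightarrow> p \<in> set pts | Inr m \<Rightarrow> m \<in> set lns" using chk_fl by (auto simp: list_all_iff)
    thus "v \<in> D_vertices" using chk_basic by (cases v) (auto simp: D_vertices_def P2_eq)
  qed
  show "card (set fl) = 16" using fl distinct_card by metis
  show "bij_betw ((!) fl) {0..<16} (set fl)"
    by (rule bij_betw_nth) (use fl in auto)
  show "\<forall>i\<in>{0..<16}. \<forall>j\<in>{0..<16}. m666_adj i j \<longleftrightarrow> inc_adj (fl!i) (fl!j)"
    using chk_adj by (simp add: list_all_iff)
  define \<Phi> where "\<Phi> = (\<lambda>k. vL (A26!k)) ` set sidx"
  have sub: "\<Phi> \<subseteq> vL ` set A26" unfolding \<Phi>_def using sidx_lt by (auto simp: nth_mem)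
  have P: "\<forall>r\<in>vL ` set A26. P3 \<Phi> r" using all_P3 unfolding \<Phi>_def .
  have N: "\<forall>r\<in>vL ` set A26. herm r r = -3" using len14 nrm9 herm_root by auto
  show "eq_up_to_units (rad (D_root xf lf ` set fl)) (rad (D_root xf lf ` D_vertices))"
    unfolding Droot_S Droot_V \<Phi>_def[symmetric]
    by (rule equ_main[OF sub]) (use P in \<open>auto simp: P3_def\<close>)
  show "refl_group (D_root xf lf ` set fl) = refl_group (D_root xf lf ` D_vertices)"
    unfolding Droot_S Droot_V \<Phi>_def[symmetric]
    by (rule group_main[OF sub N P])
qed


end
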